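(* Let $G$ be a sequential space and let $X\subseteq G$ be a countable set with no isolated points as a subspace of $G$. Then the forcing $\mathbb L_{\mathrm{nwd}^*(X)}$ strongly preserves $\omega$-hitting.
   Context: All spaces are regular. $\mathrm{nwd}^*(X)$ is the filter of dense open subsets of $X$ (a free filter on the countable set $X$, identified with $\omega$). For a free filter $\mathcal F$ on $\omega$, the Laver--Mathias--Prikry forcing $\mathbb L_{\mathcal F}$ consists of trees $T\subseteq\omega^{<\omega}$ having a stem $s_T\in T$ such that every $s\in T$ satisfies $s\subseteq s_T$ or $s_T\subseteq s$, and for every $s\in T$ with $s\supseteq s_T$ the set $\{n\in\omega: s^\frown n\in T\}\in\mathcal F$; it is ordered by inclusion. A family $\mathcal H\subseteq[\omega]^\omega$ is $\omega$-hitting if for every sequence $(A_n)_{n\in\omega}$ of infinite subsets of $\omega$ there is $H\in\mathcal H$ with $H\cap A_n$ infinite for all $n$. A forcing $\mathbb P$ strongly preserves $\omega$-hitting if for every sequence $(\dot A_n)_{n\in\omega}$ of $\mathbb P$-names for infinite subsets of $\omega$ there is a sequence $(B_n)_{n\in\omega}$ of infinite subsets of $\omega$ such that for every $B\subseteq\omega$ with $B\cap B_n$ infinite for all $n$, $\Vdash_{\mathbb P}$ "$B\cap\dot A_n$ is infinite for all $n$". *)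

theory Defs
  imports "HOL-Analysis.Analysis" "HOL-Library.Sublist"
begin

definition sequential_space :: "'a topology \<Rightarrow> bool" where
  "sequential_space G \<longleftrightarrow>
     (\<forall>S. S \<subseteq> topspace G \<longrightarrow>
        (\<forall>f l. (\<forall>n. f n \<in> S) \<and> limitin G f l sequentially \<longrightarrow> l \<in> S) \<longrightarrow> closedin G S)"

definition nwd_star :: "'a topology \<Rightarrow> 'a set \<Rightarrow> 'a set set" where
  "nwd_star G X = {U. U \<subseteq> X \<and> openin (subtopology G X) U
                      \<and> (subtopology G X) closure_of U = X}"

text \<open>Conditions of the Laver--Mathias--Prikry forcing L_F: trees T of finite
  sequences (lists) of naturals with a stem st in T comparable with every node,
  and F-many immediate successors above the stem.  Order: inclusion.\<close>
definition laver_cond :: "nat set set \<Rightarrow> nat list set \<Rightarrow> bool" where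
  "laver_cond F T \<longleftrightarrow>
     (\<forall>t\<in>T. \<forall>s. prefix s t \<longrightarrow> s \<in> T) \<and>
     (\<exists>st\<in>T. (\<forall>s\<in>T. prefix s st \<or> prefix st s) \<and>
              (\<forall>s\<in>T. prefix st s \<longrightarrow> {n. s @ [n] \<in> T} \<in> F))"

definition laver_forcing :: "nat set set \<Rightarrow> nat list set set" where
  "laver_forcing F = {T. laver_cond F T}"

text \<open>A P-name for a subset of omega, represented (up to forced equality) by its
  forcing relation D = {(p,k). p forces k in the name}: D is downward closed
  and closed under density (if densely many q below p force k in the name then so
  does p).  Every such D arises from a nice name and conversely.\<close>
definition set_name :: "'p set \<Rightarrow> ('p \<Rightarrow> 'p \<Rightarrow> bool) \<Rightarrow> ('p \<times> nat) set \<Rightarrow> bool" where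
  "set_name P le D \<longleftrightarrow>
     (\<forall>p k. (p, k) \<in> D \<longrightarrow> p \<in> P) \<and>
     (\<forall>p q k. (p, k) \<in> D \<longrightarrow> q \<in> P \<longrightarrow> le q p \<longrightarrow> (q, k) \<in> D) \<and>
     (\<forall>p\<in>P. \<forall>k. (\<forall>q\<in>P. le q p \<longrightarrow> (\<exists>r\<in>P. le r q \<and> (r, k) \<in> D)) \<longrightarrow> (p, k) \<in> D)"

text \<open>The weakest condition forces "B \<inter> name is infinite".\<close>
definition forces_inter_infinite :: "'p set \<Rightarrow> ('p \<Rightarrow> 'p \<Rightarrow> bool) \<Rightarrow> nat set \<Rightarrow> ('p \<times> nat) set \<Rightarrow> bool" where
  "forces_inter_infinite P le B D \<longleftrightarrow>
     (\<forall>p\<in>P. \<forall>m. \<exists>q\<in>P. le q p \<and> (\<exists>k\<in>B. m \<le> k \<and> (q, k) \<in> D))"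

definition strongly_preserves_omega_hitting :: "'p set \<Rightarrow> ('p \<Rightarrow> 'p \<Rightarrow> bool) \<Rightarrow> bool" where
  "strongly_preserves_omega_hitting P le \<longleftrightarrow>
     (\<forall>A :: nat \<Rightarrow> ('p \<times> nat) set.
        (\<forall>n. set_name P le (A n) \<and> forces_inter_infinite P le UNIV (A n)) \<longrightarrow>
        (\<exists>Bs :: nat \<Rightarrow> nat set. (\<forall>n. infinite (Bs n)) \<and>
           (\<forall>B. (\<forall>n. infinite (B \<inter> Bs n)) \<longrightarrow>
                (\<forall>n. forces_inter_infinite P le B (A n)))))"

end

theory Submission
  imports Defs
begin

lemma seq_closedin:
  assumes "sequential_space G" "S \<subseteq> topspace G"
    "\<And>f l. (\<forall>n. f n \<in> S) \<Longrightarrow> limitin G f l sequentially \<Longrightarrow> l \<in> S"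
  shows "closedin G S"
  using assms unfolding sequential_space_def by blast

lemma ctight:
  assumes seq: "sequential_space G" and x: "x \<in> G closure_of S"
  shows "\<exists>E. E \<subseteq> S \<and> countable E \<and> x \<in> G closure_of E"
proof -
  define Z where "Z = {z \<in> topspace G. \<exists>E. E \<subseteq> S \<and> countable E \<and> z \<in> G closure_of E}"
  have "closedin G Z"
  proof (rule seq_closedin[OF seq])
    show "Z \<subseteq> topspace G" unfolding Z_def by auto
  next
    fix f l assume f: "\<forall>n. f n \<in> Z" and lim: "limitin G f l sequentially"
    then have "\<forall>n. \<exists>E. E \<subseteq> S \<and> countable E \<and> f n \<in> G closure_of E" unfolding Z_def by auto
    then obtain E where E: "\<And>n. E n \<subseteq> S \<and> countable (E n) \<and> f n \<in> G closure_of (E n)" by metis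
    define EE where "EE = (\<Union>n. E n)"
    have "countable EE" unfolding EE_def using E by auto
    have "EE \<subseteq> S" unfolding EE_def using E by auto
    have "\<forall>n. f n \<in> G closure_of EE"
      using E closure_of_mono[of "E _" EE G] unfolding EE_def by blast
    then have "l \<in> G closure_of EE"
      using limitin_closedin[OF lim closedin_closure_of[of G EE]] by auto
    then show "l \<in> Z" unfolding Z_def using \<open>countable EE\<close> \<open>EE \<subseteq> S\<close> limitin_topspace[OF lim] by auto
  qed
  moreover have "topspace G \<inter> S \<subseteq> Z"
  proof
    fix z assume z: "z \<in> topspace G \<inter> S"
    then have "z \<in> G closure_of {z}" using closure_of_subset[of "{z}" G] by auto
    then show "z \<in> Z" unfolding Z_def using z by auto
  qed
  ultimately have "G closure_of S \<subseteq> Z"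
    by (metis closure_of_minimal closure_of_restrict)
  then show ?thesis using x unfolding Z_def by auto
qed

locale sett =
  fixes G :: "'a topology" and X :: "'a set" and e :: "nat \<Rightarrow> 'a"
  assumes seq: "sequential_space G" and Xsub: "X \<subseteq> topspace G"
    and noiso: "\<forall>x\<in>X. \<not> openin (subtopology G X) {x}"
    and bij: "bij_betw e UNIV X"
begin

definition FF :: "nat set set" where "FF = {A. e ` A \<in> nwd_star G X}"
definition pos :: "nat set \<Rightarrow> bool" where "pos Y \<longleftrightarrow> (\<forall>A\<in>FF. A \<inter> Y \<noteq> {})"

abbreviation "XT \<equiv> subtopology G X"

lemma inj_e: "inj e" using bij bij_betw_def by blast
lemma e_X: "e i \<in> X" using bij bij_betwE by blast
lemma eimg_X: "e ` A \<subseteq> X" using e_X by blast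
lemma top_XT: "topspace XT = X" using Xsub by auto

lemma surj_X: "x \<in> X \<Longrightarrow> \<exists>i. x = e i"
  using bij by (metis bij_betw_imp_surj_on imageE)

lemma range_e: "range e = X" using bij by (simp add: bij_betw_def)

lemma e_vimage: "U \<subseteq> X \<Longrightarrow> e ` (e -` U) = U"
  by (simp add: image_vimage_eq range_e Int_absorb2)

lemma in_eimg: "e i \<in> e ` A \<longleftrightarrow> i \<in> A"
  using inj_e by (simp add: inj_image_mem_iff)

lemma FF_iff: "A \<in> FF \<longleftrightarrow> openin XT (e ` A) \<and> (\<forall>V. openin XT V \<and> V \<noteq> {} \<longrightarrow> e ` A \<inter> V \<noteq> {})"
proof -
  have "XT closure_of (e ` A) = X \<longleftrightarrow> (\<forall>V. openin XT V \<and> V \<noteq> {} \<longrightarrow> e ` A \<inter> V \<noteq> {})"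
    using dense_intersects_open[of XT "e ` A"] top_XT by simp
  then show ?thesis unfolding FF_def nwd_star_def using eimg_X by auto
qed

lemma FF_Int: "A \<in> FF \<Longrightarrow> B \<in> FF \<Longrightarrow> A \<inter> B \<in> FF"
proof -
  assume A: "A \<in> FF" and B: "B \<in> FF"
  have eq: "e ` (A \<inter> B) = e ` A \<inter> e ` B" using inj_e by (simp add: image_Int)
  have o: "openin XT (e ` (A \<inter> B))" using A B eq by (simp add: FF_iff openin_Int)
  have "e ` (A \<inter> B) \<inter> V \<noteq> {}" if "openin XT V" "V \<noteq> {}" for V
  proof -
    have "e ` A \<inter> V \<noteq> {}" using A that FF_iff by blast
    moreover have "openin XT (e ` A \<inter> V)" using A that FF_iff openin_Int by blast
    ultimately have "e ` B \<inter> (e ` A \<inter> V) \<noteq> {}" using B FF_iff by blast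
    then show ?thesis using eq by blast
  qed
  then show ?thesis using o FF_iff by blast
qed

lemma FF_UNIV: "UNIV \<in> FF"
proof -
  have "e ` UNIV = X" using bij by (simp add: bij_betw_def)
  then show ?thesis using FF_iff top_XT openin_topspace[of XT]
    by (metis inf.absorb_iff2 openin_subset)
qed

lemma X_ne: "X \<noteq> {}" using e_X by blast

lemma FF_two: "A \<in> FF \<Longrightarrow> \<exists>i j. i \<in> A \<and> j \<in> A \<and> i \<noteq> j"
proof -
  assume A: "A \<in> FF"
  have "openin XT X" using top_XT openin_topspace[of XT] by simp
  then have "e ` A \<inter> X \<noteq> {}" using A FF_iff X_ne by blast
  then obtain i where i: "i \<in> A" by blast
  show ?thesis
  proof (rule ccontr)
    assume "\<not> ?thesis"
    then have "A = {i}" using i by blast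
    then have "openin XT {e i}" using A FF_iff by auto
    then show False using noiso e_X by blast
  qed
qed

lemma not_pos: "\<not> pos Y \<longleftrightarrow> (\<exists>A\<in>FF. A \<inter> Y = {})" unfolding pos_def by blast

lemma pos_mono[mono]: "A \<subseteq> B \<Longrightarrow> pos A \<longrightarrow> pos B" unfolding pos_def by blast

lemma not_pos_empty: "\<not> pos {}" using FF_UNIV not_pos by blast

lemma FF_fin_avoid:
  fixes Y :: "nat \<Rightarrow> nat set" and n :: nat
  assumes "\<forall>k. \<exists>A\<in>FF. A \<inter> Y k = {}"
  shows "\<exists>A\<in>FF. \<forall>k<n. A \<inter> Y k = {}"
proof (induction n)
  case 0 then show ?case using FF_UNIV by blast
next
  case (Suc n)
  then obtain A where A: "A \<in> FF" "\<forall>k<n. A \<inter> Y k = {}" by blast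
  obtain B where B: "B \<in> FF" "B \<inter> Y n = {}" using assms by blast
  have "A \<inter> B \<in> FF" using A B FF_Int by blast
  moreover have "\<forall>k<Suc n. A \<inter> B \<inter> Y k = {}" using A B less_Suc_eq by auto
  ultimately show ?case by blast
qed

end

context sett begin

lemma L1:
  fixes \<phi> :: "nat \<Rightarrow> nat set"
  assumes fin: "\<And>i. finite (\<phi> i)" and small: "\<And>k. \<not> pos {i. k \<in> \<phi> i}"
    and big: "pos {i. \<phi> i \<noteq> {}}"
  shows "\<exists>CC. countable CC \<and> (\<forall>C\<in>CC. infinite C) \<and> (\<forall>A\<in>FF. \<exists>C\<in>CC. finite (C - (\<Union>i\<in>A. \<phi> i)))"
proof -
  define Pk where "Pk k = e ` {i. k \<in> \<phi> i}" for k
  define R where "R n = (\<Union>k\<in>{n..}. Pk k)" for n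
  define Ys where "Ys = {y. \<exists>q kk. (\<forall>j. q j \<in> G closure_of Pk (kk j)) \<and> (\<forall>k. finite {j. kk j = k}) \<and> limitin G q y sequentially}"
  have Pk_top: "Pk k \<subseteq> topspace G" for k unfolding Pk_def using Xsub eimg_X by blast
  have S1: "x \<in> G closure_of Ys" if x: "x \<in> topspace G" and gx: "\<forall>n. x \<in> G closure_of R n" for x
  proof -
    have "\<exists>y. y \<in> Ys \<and> y \<in> Op" if Op: "openin G Op" "x \<in> Op" for Op
    proof (rule ccontr)
      assume no: "\<not> (\<exists>y. y \<in> Ys \<and> y \<in> Op)"
      have "\<exists>k\<ge>n. x \<in> G closure_of Pk k" for n
      proof -
        define M where "M = (topspace G - Op) \<union> (\<Union>k\<in>{n..}. G closure_of Pk k)"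
        have "closedin G M"
        proof (rule seq_closedin[OF seq])
          show "M \<subseteq> topspace G" unfolding M_def by (intro Un_least Diff_subset UN_least closure_of_subset_topspace)
        next
          fix f l assume f: "\<forall>j. f j \<in> M" and lim: "limitin G f l sequentially"
          have l: "l \<in> topspace G" using lim limitin_topspace by metis
          show "l \<in> M"
          proof (cases "l \<in> Op")
            case False then show ?thesis using l M_def by blast
          next
            case True
            then obtain N where N: "\<forall>j\<ge>N. f j \<in> Op" using lim Op(1) unfolding limitin_sequentially by blast
            have "\<forall>j. \<exists>k. j \<ge> N \<longrightarrow> (k \<ge> n \<and> f j \<in> G closure_of Pk k)"
            proof
              fix j
              show "\<exists>k. j \<ge> N \<longrightarrow> (k \<ge> n \<and> f j \<in> G closure_of Pk k)"
              proof (cases "j \<ge> N")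
                case True
                then have "f j \<in> Op" "f j \<in> M" using N f by auto
                then have "f j \<in> (\<Union>k\<in>{n..}. G closure_of Pk k)" unfolding M_def by blast
                then show ?thesis by auto
              qed auto
            qed
            then obtain kf where kf: "\<And>j. j \<ge> N \<Longrightarrow> kf j \<ge> n \<and> f j \<in> G closure_of Pk (kf j)" by metis
            show ?thesis
            proof (cases "\<exists>k. infinite {j. j \<ge> N \<and> kf j = k}")
              case True
              then obtain k where k: "infinite {j. j \<ge> N \<and> kf j = k}" by blast
              then obtain j0 where "j0 \<in> {j. j \<ge> N \<and> kf j = k}" using not_finite_existsD by blast
              then have kn: "k \<ge> n" using kf by blast
              have "l \<in> G closure_of Pk k"
                unfolding in_closure_of
              proof (intro conjI allI impI)
                show "l \<in> topspace G" by (rule l)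
                fix V assume V: "l \<in> V \<and> openin G V"
                then obtain N' where N': "\<forall>j\<ge>N'. f j \<in> V" using lim unfolding limitin_sequentially by blast
                obtain j where j: "j \<in> {j. j \<ge> N \<and> kf j = k}" "j \<ge> N'"
                  using k unfolding infinite_nat_iff_unbounded_le by blast
                have "f j \<in> G closure_of Pk k" using kf j by auto
                moreover have "f j \<in> V" using N' j by auto
                ultimately show "\<exists>y. y \<in> Pk k \<and> y \<in> V" using V unfolding in_closure_of by blast
              qed
              then show ?thesis unfolding M_def using kn by blast
            next
              case False
              define q where "q = (\<lambda>j. f (j + N))"
              define kk where "kk = (\<lambda>j. kf (j + N))"
              have "\<forall>j. q j \<in> G closure_of Pk (kk j)" using kf q_def kk_def by auto
              moreover have "\<forall>k. finite {j. kk j = k}"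
              proof
                fix k
                have "finite {j. j \<ge> N \<and> kf j = k}" using False by blast
                then have "finite ((\<lambda>j. j - N) ` {j. j \<ge> N \<and> kf j = k})" by blast
                moreover have "{j. kk j = k} \<subseteq> (\<lambda>j. j - N) ` {j. j \<ge> N \<and> kf j = k}"
                proof
                  fix j assume "j \<in> {j. kk j = k}"
                  then have "j + N \<in> {j. j \<ge> N \<and> kf j = k}" "j = (j + N) - N" using kk_def by auto
                  then show "j \<in> (\<lambda>j. j - N) ` {j. j \<ge> N \<and> kf j = k}" by blast
                qed
                ultimately show "finite {j. kk j = k}" using finite_subset by blast
              qed
              moreover have "limitin G q l sequentially"
                unfolding q_def by (rule limitin_sequentially_offset[OF lim])
              ultimately have "l \<in> Ys" unfolding Ys_def
                by (intro CollectI exI[of _ q] exI[of _ kk]) simp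
              then show ?thesis using no True by blast
            qed
          qed
        qed
        moreover have "R n \<subseteq> M" unfolding R_def M_def using closure_of_subset[OF Pk_top] by blast
        ultimately have "G closure_of R n \<subseteq> M" by (meson closure_of_minimal)
        then have "x \<in> M" using gx by blast
        then show ?thesis using Op(2) unfolding M_def by blast
      qed
      then have inf: "infinite {k. x \<in> G closure_of Pk k}" unfolding infinite_nat_iff_unbounded_le by blast
      define kk where "kk = enumerate {k. x \<in> G closure_of Pk k}"
      have sm: "strict_mono kk" unfolding strict_mono_def kk_def using enumerate_mono inf by blast
      have "\<forall>j. x \<in> G closure_of Pk (kk j)" using enumerate_in_set[OF inf] kk_def by auto
      moreover have "\<forall>k. finite {j. kk j = k}"
      proof
        fix k
        have "finite (kk -` {k})" using finite_vimageI[of "{k}" kk] strict_mono_imp_inj_on[OF sm] by simp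
        then show "finite {j. kk j = k}" by (simp add: vimage_def)
      qed
      moreover have "limitin G (\<lambda>j. x) x sequentially" using x by simp
      ultimately have "x \<in> Ys" unfolding Ys_def
        by (intro CollectI exI[of _ "\<lambda>j. x"] exI[of _ kk]) simp
      then show False using no Op(2) by blast
    qed
    then show ?thesis using x by (simp add: in_closure_of)
  qed
  define E0 where "E0 = e ` {i. \<phi> i \<noteq> {}}"
  define V0 where "V0 = X - XT closure_of (X - XT closure_of E0)"
  have E0X: "E0 \<subseteq> X" unfolding E0_def by (rule eimg_X)
  have V0X: "V0 \<subseteq> X" unfolding V0_def by blast
  have V0open: "openin XT V0"
    unfolding V0_def using openin_diff[OF openin_topspace closedin_closure_of, of XT] top_XT by simp
  have V0cl: "z \<in> XT closure_of E0" if "z \<in> V0" for z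
  proof (rule ccontr)
    assume "z \<notin> XT closure_of E0"
    then have "z \<in> X - XT closure_of E0" using that V0X by blast
    moreover have "X - XT closure_of E0 \<subseteq> XT closure_of (X - XT closure_of E0)"
      using closure_of_subset[of "X - XT closure_of E0" XT] top_XT by blast
    ultimately show False using that unfolding V0_def by blast
  qed
  have V0ne: "V0 \<noteq> {}"
  proof
    assume V0e: "V0 = {}"
    define U where "U = X - XT closure_of E0"
    have UX: "U \<subseteq> X" unfolding U_def by blast
    have Uo: "openin XT U"
      unfolding U_def using openin_diff[OF openin_topspace closedin_closure_of, of XT] top_XT by simp
    have "XT closure_of U \<subseteq> X" using closure_of_subset_topspace[of XT U] top_XT by simp
    moreover have "X \<subseteq> XT closure_of U" using V0e unfolding V0_def U_def by blast
    ultimately have Ucl: "XT closure_of U = X" by blast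
    define A where "A = e -` U"
    have eA: "e ` A = U" unfolding A_def using e_vimage[OF UX] .
    have "A \<in> FF" unfolding FF_def nwd_star_def using eA UX Uo Ucl by simp
    then have "A \<inter> {i. \<phi> i \<noteq> {}} \<noteq> {}" using big unfolding pos_def by blast
    then obtain i where i: "e i \<in> U" "\<phi> i \<noteq> {}" unfolding A_def by blast
    have "e i \<in> E0" unfolding E0_def using i by blast
    then have "e i \<in> XT closure_of E0" using closure_of_subset[of E0 XT] E0X top_XT by blast
    then show False using i unfolding U_def by blast
  qed
  have good: "\<forall>n. x \<in> G closure_of R n" if xV: "x \<in> V0" for x
  proof
    fix n
    have "\<forall>k. \<exists>A\<in>FF. A \<inter> {i. k \<in> \<phi> i} = {}"
    proof
      fix k show "\<exists>A\<in>FF. A \<inter> {i. k \<in> \<phi> i} = {}" using small[of k] unfolding not_pos .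
    qed
    then obtain A where A: "A \<in> FF" "\<forall>k<n. A \<inter> {i. k \<in> \<phi> i} = {}"
      using FF_fin_avoid[of "\<lambda>k. {i. k \<in> \<phi> i}" n] by auto
    have Ao: "openin XT (e ` A)" and Ad: "\<And>V. openin XT V \<Longrightarrow> V \<noteq> {} \<Longrightarrow> e ` A \<inter> V \<noteq> {}"
      using A(1) unfolding FF_iff by auto
    show "x \<in> G closure_of R n" unfolding in_closure_of
    proof (intro conjI allI impI)
      show "x \<in> topspace G" using xV V0X Xsub by blast
      fix Op assume Op: "x \<in> Op \<and> openin G Op"
      have "openin XT (Op \<inter> X)" unfolding openin_subtopology using Op by blast
      then have W0: "openin XT ((Op \<inter> X) \<inter> V0)" using V0open by (rule openin_Int)
      have eqO: "(Op \<inter> X) \<inter> V0 = Op \<inter> V0" using V0X by blast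
      have W: "openin XT (Op \<inter> V0)" using W0 unfolding eqO .
      have "Op \<inter> V0 \<noteq> {}" using Op xV by blast
      then have "e ` A \<inter> (Op \<inter> V0) \<noteq> {}" using Ad W by blast
      then obtain z where z: "z \<in> e ` A" "z \<in> Op" "z \<in> V0" by blast
      have zcl: "z \<in> XT closure_of E0" using V0cl z(3) .
      have "openin XT (e ` A \<inter> (Op \<inter> V0))" using openin_Int[OF Ao W] .
      moreover have "z \<in> e ` A \<inter> (Op \<inter> V0)" using z by blast
      ultimately obtain p where p: "p \<in> E0" "p \<in> e ` A \<inter> (Op \<inter> V0)"
        using zcl unfolding in_closure_of by (meson)
      then obtain i where i: "p = e i" "\<phi> i \<noteq> {}" unfolding E0_def by blast
      then obtain k where k: "k \<in> \<phi> i" by blast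
      have "i \<in> A" using p i in_eimg by auto
      then have "\<not> k < n" using A(2) k by blast
      then have "p \<in> R n" using k i unfolding R_def Pk_def by auto
      then show "\<exists>y. y \<in> R n \<and> y \<in> Op" using p by blast
    qed
  qed
  define GX where "GX = {x \<in> X. \<forall>n. x \<in> G closure_of R n}"
  have "\<forall>x\<in>GX. \<exists>E. E \<subseteq> Ys \<and> countable E \<and> x \<in> G closure_of E"
  proof
    fix x assume "x \<in> GX"
    then have "x \<in> G closure_of Ys" using S1 Xsub unfolding GX_def by blast
    then show "\<exists>E. E \<subseteq> Ys \<and> countable E \<and> x \<in> G closure_of E" using ctight[OF seq] by blast
  qed
  from bchoice[OF this] obtain Ex where Ex0: "\<forall>x\<in>GX. Ex x \<subseteq> Ys \<and> countable (Ex x) \<and> x \<in> G closure_of Ex x"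
    ..
  have Ex: "\<And>x. x \<in> GX \<Longrightarrow> Ex x \<subseteq> Ys \<and> countable (Ex x) \<and> x \<in> G closure_of Ex x"
    using Ex0 by blast
  define DD where "DD = (\<Union>x\<in>GX. Ex x)"
  have cX: "countable X" unfolding range_e[symmetric] by (rule countable_image) simp
  have cGX: "countable GX" by (rule countable_subset[OF _ cX]) (auto simp: GX_def)
  have cDD: "countable DD" unfolding DD_def by (rule countable_UN[OF cGX]) (use Ex in blast)
  have DDY: "DD \<subseteq> Ys" unfolding DD_def using Ex by blast
  have "\<forall>y\<in>DD. \<exists>q kk. (\<forall>j. q j \<in> G closure_of Pk (kk j)) \<and> (\<forall>k. finite {j. kk j = k}) \<and> limitin G q y sequentially"
  proof
    fix y assume "y \<in> DD"
    then have "y \<in> Ys" using DDY by blast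
    then show "\<exists>q kk. (\<forall>j. q j \<in> G closure_of Pk (kk j)) \<and> (\<forall>k. finite {j. kk j = k}) \<and> limitin G q y sequentially"
      unfolding Ys_def by (rule CollectD)
  qed
  from bchoice[OF this] obtain qq where qq: "\<forall>y\<in>DD. \<exists>kk. (\<forall>j. qq y j \<in> G closure_of Pk (kk j)) \<and> (\<forall>k. finite {j. kk j = k}) \<and> limitin G (qq y) y sequentially"
    ..
  from bchoice[OF qq] obtain kq where kq: "\<forall>y\<in>DD. (\<forall>j. qq y j \<in> G closure_of Pk (kq y j)) \<and> (\<forall>k. finite {j. kq y j = k}) \<and> limitin G (qq y) y sequentially"
    ..
  have qk: "\<And>y. y \<in> DD \<Longrightarrow> (\<forall>j. qq y j \<in> G closure_of Pk (kq y j)) \<and> (\<forall>k. finite {j. kq y j = k}) \<and> limitin G (qq y) y sequentially"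
    using kq by blast
  define CC where "CC = (\<lambda>y. range (kq y)) ` DD"
  show ?thesis
  proof (intro exI conjI ballI)
    show "countable CC" unfolding CC_def by (rule countable_image[OF cDD])
  next
    fix C assume "C \<in> CC"
    then obtain y where y: "y \<in> DD" "C = range (kq y)" unfolding CC_def by blast
    show "infinite C"
    proof
      assume fC: "finite C"
      have "(UNIV :: nat set) = (\<Union>k\<in>C. {j. kq y j = k})" using y by auto
      moreover have "finite (\<Union>k\<in>C. {j. kq y j = k})" using fC qk[OF y(1)] by (intro finite_UN_I) auto
      ultimately show False by simp
    qed
  next
    fix A assume A: "A \<in> FF"
    have Ao: "openin XT (e ` A)" and Ad: "\<And>V. openin XT V \<Longrightarrow> V \<noteq> {} \<Longrightarrow> e ` A \<inter> V \<noteq> {}"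
      using A unfolding FF_iff by auto
    have "e ` A \<inter> V0 \<noteq> {}" using Ad[OF V0open V0ne] .
    then obtain x where x: "x \<in> e ` A" "x \<in> V0" by blast
    have xGX: "x \<in> GX" unfolding GX_def using x V0X good by blast
    from Ao obtain Op where Op: "openin G Op" "e ` A = Op \<inter> X" unfolding openin_subtopology by blast
    have "x \<in> Op" using x Op by blast
    moreover have "x \<in> G closure_of Ex x" using Ex[OF xGX] by blast
    ultimately obtain y where y: "y \<in> Ex x" "y \<in> Op" using Op(1) unfolding in_closure_of by meson
    have yD: "y \<in> DD" unfolding DD_def using y xGX by blast
    have "limitin G (qq y) y sequentially" using qk[OF yD] by blast
    then obtain N where N: "\<forall>j\<ge>N. qq y j \<in> Op" using Op(1) y(2) unfolding limitin_sequentially by meson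
    have "range (kq y) - (\<Union>i\<in>A. \<phi> i) \<subseteq> kq y ` {..<N}"
    proof
      fix k assume k: "k \<in> range (kq y) - (\<Union>i\<in>A. \<phi> i)"
      then obtain j where j: "k = kq y j" by blast
      show "k \<in> kq y ` {..<N}"
      proof (cases "j < N")
        case True then show ?thesis using j by blast
      next
        case False
        then have "qq y j \<in> Op" using N by auto
        moreover have "qq y j \<in> G closure_of Pk (kq y j)" using qk[OF yD] by blast
        ultimately obtain p where p: "p \<in> Pk (kq y j)" "p \<in> Op" using Op(1) unfolding in_closure_of by meson
        then obtain i where i: "p = e i" "kq y j \<in> \<phi> i" unfolding Pk_def by blast
        have "p \<in> Op \<inter> X" using p(2) i(1) e_X by simp
        then have "p \<in> e ` A" unfolding Op(2) .
        then have "i \<in> A" using i(1) in_eimg by simp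
        then have "kq y j \<in> (\<Union>i\<in>A. \<phi> i)" using i(2) by blast
        then have False using k unfolding j by simp
        then show ?thesis ..
      qed
    qed
    then have "finite (range (kq y) - (\<Union>i\<in>A. \<phi> i))" by (rule finite_subset) simp
    moreover have "range (kq y) \<in> CC" unfolding CC_def using yD by blast
    ultimately show "\<exists>C\<in>CC. finite (C - (\<Union>i\<in>A. \<phi> i))" by blast
  qed
qed

end

context sett begin

definition isstem :: "nat list set \<Rightarrow> nat list \<Rightarrow> bool" where
  "isstem T s \<longleftrightarrow> s \<in> T \<and> (\<forall>t\<in>T. prefix t s \<or> prefix s t) \<and> (\<forall>t\<in>T. prefix s t \<longrightarrow> {n. t @ [n] \<in> T} \<in> FF)"

definition PP :: "nat list set set" where "PP = laver_forcing FF"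

lemma PP_iff: "T \<in> PP \<longleftrightarrow> (\<forall>t\<in>T. \<forall>s. prefix s t \<longrightarrow> s \<in> T) \<and> (\<exists>s. isstem T s)"
  unfolding PP_def laver_forcing_def laver_cond_def isstem_def by auto

lemma prefix_tr: "prefix a b \<Longrightarrow> prefix b c \<Longrightarrow> prefix a c"
  using prefix_order.trans by blast

lemma stem_le:
  assumes "isstem q t" "q \<subseteq> T" "isstem T s"
  shows "prefix s t"
proof (rule ccontr)
  assume ns: "\<not> prefix s t"
  have tT: "t \<in> T" using assms(1,2) unfolding isstem_def by blast
  have ts: "prefix t s" using assms(3) tT ns unfolding isstem_def by blast
  have sq: "{n. t @ [n] \<in> q} \<in> FF" using assms(1) unfolding isstem_def by auto
  obtain a b where ab: "a \<in> {n. t @ [n] \<in> q}" "b \<in> {n. t @ [n] \<in> q}" "a \<noteq> b"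
    using FF_two[OF sq] by blast
  have key: "n = s ! length t" if "t @ [n] \<in> q" for n
  proof -
    have "t @ [n] \<in> T" using that assms(2) by blast
    then have "prefix (t @ [n]) s \<or> prefix s (t @ [n])" using assms(3) unfolding isstem_def by blast
    then show ?thesis
    proof
      assume "prefix (t @ [n]) s"
      then obtain r where "s = t @ [n] @ r" by (auto simp: prefix_def)
      then show ?thesis by simp
    next
      assume "prefix s (t @ [n])"
      then have "s = t @ [n] \<or> prefix s t" by simp
      then have "s = t @ [n]" using ns by blast
      then show ?thesis by simp
    qed
  qed
  have "a = s ! length t" using key ab(1) by simp
  moreover have "b = s ! length t" using key ab(2) by simp
  ultimately have "a = b" by simp
  then show False using ab(3) by simp
qed

lemma inter_cond:
  assumes q: "q \<in> PP" "isstem q t" and T: "T \<in> PP" "isstem T s" and tT: "t \<in> T" and st: "prefix s t"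
  shows "q \<inter> T \<in> PP"
proof -
  have pc: "\<forall>u\<in>q \<inter> T. \<forall>v. prefix v u \<longrightarrow> v \<in> q \<inter> T" using q(1) T(1) unfolding PP_iff by blast
  have "isstem (q \<inter> T) t"
    unfolding isstem_def
  proof (intro conjI ballI impI)
    show "t \<in> q \<inter> T" using q(2) tT unfolding isstem_def by blast
  next
    fix u assume "u \<in> q \<inter> T" then show "prefix u t \<or> prefix t u" using q(2) unfolding isstem_def by blast
  next
    fix u assume u: "u \<in> q \<inter> T" "prefix t u"
    have "{n. u @ [n] \<in> q} \<in> FF" using q(2) u unfolding isstem_def by blast
    moreover have "prefix s u" using prefix_tr[OF st u(2)] .
    then have "{n. u @ [n] \<in> T} \<in> FF" using T(2) u(1) unfolding isstem_def by blast
    ultimately have "{n. u @ [n] \<in> q} \<inter> {n. u @ [n] \<in> T} \<in> FF" by (rule FF_Int)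
    moreover have "{n. u @ [n] \<in> q \<inter> T} = {n. u @ [n] \<in> q} \<inter> {n. u @ [n] \<in> T}" by blast
    ultimately show "{n. u @ [n] \<in> q \<inter> T} \<in> FF" by simp
  qed
  then show ?thesis using pc unfolding PP_iff by blast
qed

context
  fixes D :: "(nat list set \<times> nat) set"
  assumes Dp: "\<And>p k. (p, k) \<in> D \<Longrightarrow> p \<in> PP"
    and Dm: "\<And>p q k. (p, k) \<in> D \<Longrightarrow> q \<in> PP \<Longrightarrow> q \<subseteq> p \<Longrightarrow> (q, k) \<in> D"
    and Dinf: "\<And>p m. p \<in> PP \<Longrightarrow> \<exists>q\<in>PP. q \<subseteq> p \<and> (\<exists>k. m \<le> k \<and> (q, k) \<in> D)"
begin

definition KK :: "nat list \<Rightarrow> nat set" where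
  "KK t = {k. \<exists>q\<in>PP. isstem q t \<and> (q, k) \<in> D}"

definition WW :: "nat list set \<Rightarrow> nat set" where
  "WW T = {k. \<exists>q\<in>PP. q \<subseteq> T \<and> (q, k) \<in> D}"

lemma pos_mono_pred[mono]: "(\<And>x. P x \<longrightarrow> Q x) \<Longrightarrow> pos {i. P i} \<longrightarrow> pos {i. Q i}"
  unfolding pos_def by blast

declare pos_mono[mono del]

inductive inL :: "nat list \<Rightarrow> nat \<Rightarrow> bool" where
  base: "k \<in> KK t \<Longrightarrow> inL t k"
| lim: "pos {i. inL (t @ [i]) k} \<Longrightarrow> inL t k"

definition LL :: "nat list \<Rightarrow> nat set" where "LL t = {k. inL t k}"

lemma fact2:
  assumes k: "k \<in> KK t" and T: "T \<in> PP" "isstem T s" and tT: "t \<in> T" and st: "prefix s t"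
  shows "k \<in> WW T"
proof -
  obtain q where q: "q \<in> PP" "isstem q t" "(q, k) \<in> D" using k unfolding KK_def by blast
  have r: "q \<inter> T \<in> PP" using inter_cond[OF q(1,2) T tT st] .
  have "(q \<inter> T, k) \<in> D" using Dm[OF q(3) r] by blast
  then show ?thesis unfolding WW_def using r by blast
qed

lemma fact5_aux:
  assumes "inL t k"
  shows "\<forall>T s. T \<in> PP \<longrightarrow> isstem T s \<longrightarrow> t \<in> T \<longrightarrow> prefix s t \<longrightarrow> k \<in> WW T"
  using assms
proof (induction rule: inL.induct)
  case (base k t)
  show ?case
  proof (intro allI impI)
    fix T s assume T: "T \<in> PP" "isstem T s" "t \<in> T" "prefix s t"
    show "k \<in> WW T" by (rule fact2[OF base T])
  qed
next
  case (lim t k)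
  show ?case
  proof (intro allI impI)
    fix T s assume T: "T \<in> PP" "isstem T s" "t \<in> T" "prefix s t"
    have A: "{n. t @ [n] \<in> T} \<in> FF" using T(2) T(3) T(4) unfolding isstem_def by auto
    have ne: "{n. t @ [n] \<in> T} \<inter> {i. inL (t @ [i]) k \<and> (\<forall>T s. T \<in> PP \<longrightarrow> isstem T s \<longrightarrow> t @ [i] \<in> T \<longrightarrow> prefix s (t @ [i]) \<longrightarrow> k \<in> WW T)} \<noteq> {}"
      using lim.IH[unfolded pos_def] A by (rule bspec)
    then obtain i where "i \<in> {n. t @ [n] \<in> T} \<inter> {i. inL (t @ [i]) k \<and> (\<forall>T s. T \<in> PP \<longrightarrow> isstem T s \<longrightarrow> t @ [i] \<in> T \<longrightarrow> prefix s (t @ [i]) \<longrightarrow> k \<in> WW T)}"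
      by (meson ex_in_conv)
    then have i: "t @ [i] \<in> T"
      "\<forall>T s. T \<in> PP \<longrightarrow> isstem T s \<longrightarrow> t @ [i] \<in> T \<longrightarrow> prefix s (t @ [i]) \<longrightarrow> k \<in> WW T"
      by auto
    have "prefix s (t @ [i])" using T(4) by simp
    then show "k \<in> WW T" using i(2)[rule_format, OF T(1) T(2) i(1)] by simp
  qed
qed

lemma fact5:
  assumes "inL t k" "T \<in> PP" "isstem T s" "t \<in> T" "prefix s t"
  shows "k \<in> WW T"
  using fact5_aux[OF assms(1), rule_format, OF assms(2-5)] .

lemma fact4:
  assumes T: "T \<in> PP" "isstem T s" and k: "k \<in> WW T"
  shows "\<exists>t. t \<in> T \<and> prefix s t \<and> k \<in> KK t"
proof -
  obtain q where q: "q \<in> PP" "q \<subseteq> T" "(q, k) \<in> D" using k unfolding WW_def by blast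
  obtain t where t: "isstem q t" using q(1) unfolding PP_iff by blast
  have "prefix s t" using stem_le[OF t q(2) T(2)] .
  moreover have "t \<in> T" using t q(2) unfolding isstem_def by blast
  moreover have "k \<in> KK t" unfolding KK_def using q(1,3) t by blast
  ultimately show ?thesis by blast
qed

lemma fact3:
  assumes "T \<in> PP" shows "infinite (WW T)"
  unfolding infinite_nat_iff_unbounded_le
proof
  fix m
  obtain q k where "q \<in> PP" "q \<subseteq> T" "m \<le> k" "(q, k) \<in> D" using Dinf[OF assms, of m] by blast
  then show "\<exists>n\<ge>m. n \<in> WW T" unfolding WW_def by blast
qed

definition phi :: "nat list \<Rightarrow> nat \<Rightarrow> nat set" where
  "phi t i = (if finite (LL (t @ [i])) then LL (t @ [i]) - LL t else {})"

lemma phi_fin: "finite (phi t i)" unfolding phi_def by simp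

lemma phi_small: "\<not> pos {i. k \<in> phi t i}"
proof (cases "inL t k")
  case True
  then have "{i. k \<in> phi t i} = {}" unfolding phi_def LL_def by auto
  then show ?thesis using not_pos_empty by simp
next
  case False
  then have np: "\<not> pos {i. inL (t @ [i]) k}" using inL.lim by blast
  have "{i. k \<in> phi t i} \<subseteq> {i. inL (t @ [i]) k}" unfolding phi_def LL_def by auto
  then show ?thesis using np pos_mono by blast
qed

definition CCt :: "nat list \<Rightarrow> nat set set" where
  "CCt t = (SOME CC. countable CC \<and> (\<forall>C\<in>CC. infinite C) \<and> (\<forall>A\<in>FF. \<exists>C\<in>CC. finite (C - (\<Union>i\<in>A. phi t i))))"

lemma CCt:
  assumes "pos {i. phi t i \<noteq> {}}"
  shows "countable (CCt t) \<and> (\<forall>C\<in>CCt t. infinite C) \<and> (\<forall>A\<in>FF. \<exists>C\<in>CCt t. finite (C - (\<Union>i\<in>A. phi t i)))"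
  unfolding CCt_def by (rule someI_ex) (rule L1[OF phi_fin phi_small assms])

definition Fam :: "nat set set" where
  "Fam = LL ` {t. infinite (LL t)} \<union> (\<Union>t\<in>{t. pos {i. phi t i \<noteq> {}}}. CCt t)"

lemma Fam_countable: "countable Fam"
proof -
  have "countable (LL ` {t. infinite (LL t)})" by (rule countable_image) simp
  moreover have "countable (\<Union>t\<in>{t. pos {i. phi t i \<noteq> {}}}. CCt t)"
    by (rule countable_UN) (simp_all add: CCt)
  ultimately show ?thesis unfolding Fam_def by (rule countable_Un)
qed

lemma Fam_inf: "C \<in> Fam \<Longrightarrow> infinite C"
  unfolding Fam_def using CCt by blast

lemma main_claim:
  assumes TP: "T \<in> PP"
  shows "\<exists>C\<in>Fam. finite (C - WW T)"
proof (rule ccontr)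
  assume no: "\<not> (\<exists>C\<in>Fam. finite (C - WW T))"
  obtain s where s: "isstem T s" using TP unfolding PP_iff by blast
  have pcT: "\<forall>t\<in>T. \<forall>u. prefix u t \<longrightarrow> u \<in> T" using TP unfolding PP_iff by blast
  have sT: "s \<in> T" using s unfolding isstem_def by blast
  have cmp: "\<And>t. t \<in> T \<Longrightarrow> prefix t s \<or> prefix s t" using s unfolding isstem_def by blast
  have succ: "\<And>t. t \<in> T \<Longrightarrow> prefix s t \<Longrightarrow> {n. t @ [n] \<in> T} \<in> FF" using s unfolding isstem_def by blast
  have LW: "LL t \<subseteq> WW T" if "t \<in> T" "prefix s t" for t
    using fact5[OF _ TP s that] unfolding LL_def by blast
  have fin: "finite (LL t)" if t: "t \<in> T" "prefix s t" for t
  proof (rule ccontr)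
    assume "infinite (LL t)"
    then have "LL t \<in> Fam" unfolding Fam_def by blast
    moreover have "LL t - WW T = {}" using LW[OF t] by blast
    ultimately show False using no by (metis finite.emptyI)
  qed
  have np: "\<not> pos {i. phi t i \<noteq> {}}" if t: "t \<in> T" "prefix s t" for t
  proof
    assume p: "pos {i. phi t i \<noteq> {}}"
    have A: "{n. t @ [n] \<in> T} \<in> FF" using succ[OF t] .
    obtain C where C: "C \<in> CCt t" "finite (C - (\<Union>i\<in>{n. t @ [n] \<in> T}. phi t i))"
      using CCt[OF p] A by blast
    have CF: "C \<in> Fam" unfolding Fam_def using C(1) p by blast
    have "(\<Union>i\<in>{n. t @ [n] \<in> T}. phi t i) \<subseteq> WW T"
    proof
      fix k assume "k \<in> (\<Union>i\<in>{n. t @ [n] \<in> T}. phi t i)"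
      then obtain i where i: "t @ [i] \<in> T" "k \<in> phi t i" by blast
      have "prefix s (t @ [i])" using t(2) by simp
      then have "LL (t @ [i]) \<subseteq> WW T" using LW i(1) by blast
      moreover have "phi t i \<subseteq> LL (t @ [i])" unfolding phi_def by auto
      ultimately show "k \<in> WW T" using i(2) by blast
    qed
    then have "C - WW T \<subseteq> C - (\<Union>i\<in>{n. t @ [n] \<in> T}. phi t i)" by blast
    then have "finite (C - WW T)" using C(2) finite_subset by blast
    then show False using no CF by blast
  qed
  have "\<forall>t. \<exists>A. t \<in> T \<and> prefix s t \<longrightarrow> A \<in> FF \<and> (\<forall>i\<in>A. phi t i = {})"
  proof
    fix t
    show "\<exists>A. t \<in> T \<and> prefix s t \<longrightarrow> A \<in> FF \<and> (\<forall>i\<in>A. phi t i = {})"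
    proof (cases "t \<in> T \<and> prefix s t")
      case True
      then obtain A where "A \<in> FF" "A \<inter> {i. phi t i \<noteq> {}} = {}" using np not_pos by meson
      then show ?thesis by blast
    qed blast
  qed
  from choice[OF this] obtain Asel where Asel: "\<And>t. t \<in> T \<Longrightarrow> prefix s t \<Longrightarrow> Asel t \<in> FF \<and> (\<forall>i\<in>Asel t. phi t i = {})"
    by blast
  define T' where "T' = {v \<in> T. prefix v s \<or> (prefix s v \<and> (\<forall>j. length s \<le> j \<and> j < length v \<longrightarrow> v ! j \<in> Asel (take j v)))}"
  have T'sub: "T' \<subseteq> T" unfolding T'_def by blast
  have T'pc: "w \<in> T'" if v: "v \<in> T'" and wv: "prefix w v" for v w
  proof -
    have vT: "v \<in> T" using v T'sub by blast
    have wT: "w \<in> T" using pcT vT wv by blast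
    show ?thesis
    proof (cases "prefix w s")
      case True then show ?thesis unfolding T'_def using wT by blast
    next
      case False
      then have sw: "prefix s w" using cmp[OF wT] by blast
      have "\<not> prefix v s" using False wv prefix_tr by blast
      then have cv: "\<forall>j. length s \<le> j \<and> j < length v \<longrightarrow> v ! j \<in> Asel (take j v)"
        using v unfolding T'_def by blast
      obtain r where r: "v = w @ r" using wv prefixE by blast
      have "\<forall>j. length s \<le> j \<and> j < length w \<longrightarrow> w ! j \<in> Asel (take j w)"
      proof (intro allI impI)
        fix j assume j: "length s \<le> j \<and> j < length w"
        have "j < length v" using j r by simp
        then have "v ! j \<in> Asel (take j v)" using cv j by blast
        moreover have "v ! j = w ! j" using r j by (simp add: nth_append)
        moreover have "take j v = take j w" using r j by simp
        ultimately show "w ! j \<in> Asel (take j w)" by simp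
      qed
      then show ?thesis unfolding T'_def using wT sw by blast
    qed
  qed
  have sT': "s \<in> T'" unfolding T'_def using sT by simp
  have succ': "{n. t @ [n] \<in> T'} = {n. t @ [n] \<in> T} \<inter> Asel t" if t: "t \<in> T'" "prefix s t" for t
  proof (intro set_eqI iffI)
    fix n assume n: "n \<in> {n. t @ [n] \<in> T'}"
    then have tnT: "t @ [n] \<in> T" using T'sub by blast
    have "length s \<le> length t" using t(2) prefix_length_le by blast
    then have "\<not> prefix (t @ [n]) s" using prefix_length_le by fastforce
    then have "\<forall>j. length s \<le> j \<and> j < length (t @ [n]) \<longrightarrow> (t @ [n]) ! j \<in> Asel (take j (t @ [n]))"
      using n unfolding T'_def by blast
    then have "(t @ [n]) ! length t \<in> Asel (take (length t) (t @ [n]))"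
      using \<open>length s \<le> length t\<close> by (metis length_append_singleton lessI)
    then have "n \<in> Asel t" by simp
    then show "n \<in> {n. t @ [n] \<in> T} \<inter> Asel t" using tnT by blast
  next
    fix n assume n: "n \<in> {n. t @ [n] \<in> T} \<inter> Asel t"
    have tT: "t \<in> T" using t(1) T'sub by blast
    have ct: "\<forall>j. length s \<le> j \<and> j < length t \<longrightarrow> t ! j \<in> Asel (take j t)"
    proof (cases "prefix t s")
      case True
      then have "t = s" using t(2) prefix_order.antisym by blast
      then show ?thesis by auto
    next
      case False then show ?thesis using t(1) unfolding T'_def by blast
    qed
    have "\<forall>j. length s \<le> j \<and> j < length (t @ [n]) \<longrightarrow> (t @ [n]) ! j \<in> Asel (take j (t @ [n]))"
    proof (intro allI impI)
      fix j assume j: "length s \<le> j \<and> j < length (t @ [n])"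
      show "(t @ [n]) ! j \<in> Asel (take j (t @ [n]))"
      proof (cases "j < length t")
        case True
        then show ?thesis using ct j by (simp add: nth_append)
      next
        case False
        then have "j = length t" using j by simp
        then show ?thesis using n by simp
      qed
    qed
    moreover have "prefix s (t @ [n])" using t(2) by simp
    ultimately show "n \<in> {n. t @ [n] \<in> T'}" unfolding T'_def using n by blast
  qed
  have T'stem: "isstem T' s"
    unfolding isstem_def
  proof (intro conjI ballI impI)
    show "s \<in> T'" by (rule sT')
  next
    fix t assume "t \<in> T'" then show "prefix t s \<or> prefix s t" using cmp T'sub by blast
  next
    fix t assume t: "t \<in> T'" "prefix s t"
    have tT: "t \<in> T" using t(1) T'sub by blast
    have "{n. t @ [n] \<in> T} \<inter> Asel t \<in> FF"
      using FF_Int[OF succ[OF tT t(2)]] Asel[OF tT t(2)] by blast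
    then show "{n. t @ [n] \<in> T'} \<in> FF" using succ'[OF t] by simp
  qed
  have T'P: "T' \<in> PP" unfolding PP_iff using T'pc T'stem by blast
  have Lsub: "v \<in> T' \<Longrightarrow> prefix s v \<Longrightarrow> LL v \<subseteq> LL s" for v
  proof (induction v rule: rev_induct)
    case Nil
    then have "s = []" by simp
    then show ?case by simp
  next
    case (snoc i v)
    show ?case
    proof (cases "s = v @ [i]")
      case True then show ?thesis by simp
    next
      case False
      then have sv: "prefix s v" using snoc.prems(2) by simp
      have vT': "v \<in> T'" using T'pc[OF snoc.prems(1)] by simp
      have IH: "LL v \<subseteq> LL s" using snoc.IH[OF vT' sv] .
      have vT: "v \<in> T" using vT' T'sub by blast
      have "i \<in> {n. v @ [n] \<in> T'}" using snoc.prems(1) by simp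
      then have iA: "i \<in> Asel v" using succ'[OF vT' sv] by blast
      then have "phi v i = {}" using Asel[OF vT sv] by blast
      moreover have "finite (LL (v @ [i]))" using fin snoc.prems T'sub by blast
      ultimately have "LL (v @ [i]) \<subseteq> LL v" unfolding phi_def by auto
      then show ?thesis using IH by blast
    qed
  qed
  have "WW T' \<subseteq> LL s"
  proof
    fix k assume "k \<in> WW T'"
    then obtain t where t: "t \<in> T'" "prefix s t" "k \<in> KK t" using fact4[OF T'P T'stem] by blast
    have "k \<in> LL t" unfolding LL_def using inL.base[OF t(3)] by simp
    then show "k \<in> LL s" using Lsub[OF t(1,2)] by blast
  qed
  moreover have "finite (LL s)" using fin[OF sT] by simp
  ultimately have "finite (WW T')" using finite_subset by blast
  then show False using fact3[OF T'P] by simp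
qed

end
end

context sett begin

lemma name_family:
  assumes sn: "set_name PP (\<subseteq>) D" and fi: "forces_inter_infinite PP (\<subseteq>) UNIV D"
  shows "\<exists>Fm. countable Fm \<and> (\<forall>C\<in>Fm. infinite C) \<and> (\<forall>T\<in>PP. \<exists>C\<in>Fm. finite (C - {k. \<exists>q\<in>PP. q \<subseteq> T \<and> (q, k) \<in> D}))"
proof -
  have Dp: "\<And>p k. (p, k) \<in> D \<Longrightarrow> p \<in> PP" using sn unfolding set_name_def by blast
  have Dm: "\<And>p q k. (p, k) \<in> D \<Longrightarrow> q \<in> PP \<Longrightarrow> q \<subseteq> p \<Longrightarrow> (q, k) \<in> D"
    using sn unfolding set_name_def by blast
  have Dinf: "\<And>p m. p \<in> PP \<Longrightarrow> \<exists>q\<in>PP. q \<subseteq> p \<and> (\<exists>k. m \<le> k \<and> (q, k) \<in> D)"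
    using fi unfolding forces_inter_infinite_def by blast
  show ?thesis
  proof (intro exI[of _ "Fam D"] conjI ballI)
    from Dp Dm Dinf show "countable (Fam D)" by (rule Fam_countable)
  next
    fix C assume CF: "C \<in> Fam D"
    from Dp Dm Dinf CF show "infinite C" by (rule Fam_inf)
  next
    fix T assume TP: "T \<in> PP"
    from Dp Dm Dinf TP have "\<exists>C\<in>Fam D. finite (C - WW D T)" by (rule main_claim)
    moreover from Dp Dm Dinf have WWe: "WW D T = {k. \<exists>q\<in>PP. q \<subseteq> T \<and> (q, k) \<in> D}" by (rule WW_def)
    ultimately show "\<exists>C\<in>Fam D. finite (C - {k. \<exists>q\<in>PP. q \<subseteq> T \<and> (q, k) \<in> D})"
      by simp
  qed
qed

lemma UNIV_PP: "(UNIV :: nat list set) \<in> PP"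
proof -
  have "isstem UNIV []" unfolding isstem_def using FF_UNIV by simp
  then show ?thesis unfolding PP_iff by blast
qed

lemma main_thm: "strongly_preserves_omega_hitting PP (\<subseteq>)"
  unfolding strongly_preserves_omega_hitting_def
proof (intro allI impI)
  fix A :: "nat \<Rightarrow> (nat list set \<times> nat) set"
  assume hA: "\<forall>n. set_name PP (\<subseteq>) (A n) \<and> forces_inter_infinite PP (\<subseteq>) UNIV (A n)"
  have "\<forall>n. \<exists>Fm. countable Fm \<and> (\<forall>C\<in>Fm. infinite C) \<and> (\<forall>T\<in>PP. \<exists>C\<in>Fm. finite (C - {k. \<exists>q\<in>PP. q \<subseteq> T \<and> (q, k) \<in> A n}))"
  proof
    fix n
    have "set_name PP (\<subseteq>) (A n)" "forces_inter_infinite PP (\<subseteq>) UNIV (A n)" using hA by auto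
    then show "\<exists>Fm. countable Fm \<and> (\<forall>C\<in>Fm. infinite C) \<and> (\<forall>T\<in>PP. \<exists>C\<in>Fm. finite (C - {k. \<exists>q\<in>PP. q \<subseteq> T \<and> (q, k) \<in> A n}))"
      by (rule name_family)
  qed
  from choice[OF this] obtain Fm where Fm: "\<And>n. countable (Fm n) \<and> (\<forall>C\<in>Fm n. infinite C) \<and> (\<forall>T\<in>PP. \<exists>C\<in>Fm n. finite (C - {k. \<exists>q\<in>PP. q \<subseteq> T \<and> (q, k) \<in> A n}))"
    by blast
  define All where "All = (\<Union>n. Fm n)"
  have cAll: "countable All" unfolding All_def by (rule countable_UN) (simp_all add: Fm)
  have neAll: "All \<noteq> {}"
  proof -
    have "\<exists>C\<in>Fm 0. finite (C - {k. \<exists>q\<in>PP. q \<subseteq> UNIV \<and> (q, k) \<in> A 0})" using Fm[of 0] UNIV_PP by (meson)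
    then obtain C where "C \<in> Fm 0" by (meson)
    then show ?thesis unfolding All_def by blast
  qed
  have infAll: "\<And>C. C \<in> All \<Longrightarrow> infinite C" unfolding All_def using Fm by blast
  define Bs where "Bs = from_nat_into All"
  have rng: "range Bs = All" unfolding Bs_def using range_from_nat_into[OF neAll cAll] .
  show "\<exists>Bs :: nat \<Rightarrow> nat set. (\<forall>n. infinite (Bs n)) \<and>
           (\<forall>B. (\<forall>n. infinite (B \<inter> Bs n)) \<longrightarrow> (\<forall>n. forces_inter_infinite PP (\<subseteq>) B (A n)))"
  proof (intro exI[of _ Bs] conjI allI impI)
    fix n have "Bs n \<in> All" using rng rangeI[of Bs n] by simp
    then show "infinite (Bs n)" by (rule infAll)
  next
    fix B n assume hit: "\<forall>n. infinite (B \<inter> Bs n)"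
    show "forces_inter_infinite PP (\<subseteq>) B (A n)"
      unfolding forces_inter_infinite_def
    proof (intro ballI allI)
      fix p m assume p: "p \<in> PP"
      have "\<exists>C\<in>Fm n. finite (C - {k. \<exists>q\<in>PP. q \<subseteq> p \<and> (q, k) \<in> A n})" using Fm[of n] p by (meson)
      then obtain C where C: "C \<in> Fm n" "finite (C - {k. \<exists>q\<in>PP. q \<subseteq> p \<and> (q, k) \<in> A n})" by (meson)
      have "C \<in> range Bs" using C(1) rng unfolding All_def by blast
      then obtain j where j: "C = Bs j" by blast
      have iBC: "infinite (B \<inter> C)" using hit j by simp
      have "B \<inter> C \<subseteq> (B \<inter> {k. \<exists>q\<in>PP. q \<subseteq> p \<and> (q, k) \<in> A n}) \<union> (C - {k. \<exists>q\<in>PP. q \<subseteq> p \<and> (q, k) \<in> A n})" by blast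
      have "infinite (B \<inter> {k. \<exists>q\<in>PP. q \<subseteq> p \<and> (q, k) \<in> A n})"
      proof
        assume "finite (B \<inter> {k. \<exists>q\<in>PP. q \<subseteq> p \<and> (q, k) \<in> A n})"
        then have "finite ((B \<inter> {k. \<exists>q\<in>PP. q \<subseteq> p \<and> (q, k) \<in> A n}) \<union> (C - {k. \<exists>q\<in>PP. q \<subseteq> p \<and> (q, k) \<in> A n}))" using C(2) by simp
        then have "finite (B \<inter> C)" using \<open>B \<inter> C \<subseteq> _\<close> by (rule finite_subset[rotated])
        then show False using iBC by simp
      qed
      then obtain k where k: "k \<ge> m" "k \<in> B \<inter> {k. \<exists>q\<in>PP. q \<subseteq> p \<and> (q, k) \<in> A n}"
        unfolding infinite_nat_iff_unbounded_le by blast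
      then obtain q where q: "q \<in> PP" "q \<subseteq> p" "(q, k) \<in> A n" by blast
      show "\<exists>q\<in>PP. q \<subseteq> p \<and> (\<exists>k\<in>B. m \<le> k \<and> (q, k) \<in> A n)"
        using q k by blast
    qed
  qed
qed

end

theorem lemma19:
  fixes G :: "'a topology" and X :: "'a set" and e :: "nat \<Rightarrow> 'a"
  assumes "regular_space G" and "t1_space G"
    and "sequential_space G"
    and "X \<subseteq> topspace G"
    and "countable X"
    and "\<forall>x\<in>X. \<not> openin (subtopology G X) {x}"
    and "bij_betw e UNIV X"
  shows "strongly_preserves_omega_hitting
           (laver_forcing {A. e ` A \<in> nwd_star G X}) (\<subseteq>)"
proof -
  interpret sett G X e using assms(3,4,6,7) by unfold_locales
  show ?thesis using main_thm unfolding PP_def FF_def .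
qed

end
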